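(* Let $k,m\in\mathbb{N}$ and let $p_1,\ldots,p_m\in\mathbb{Z}[x_1,\ldots,x_k]$ be polynomials in $k$ variables with integer coefficients and without constant terms. Then for any finite partition $\mathcal{C}$ of $\mathbb{Z}$ and all sequences $f_1,\ldots,f_k:\mathbb{N}\to\mathbb{Z}$, there exist a cell $C\in\mathcal{C}$, an integer $a\in\mathbb{Z}$ and finite nonempty sets $F_1,\ldots,F_k\subseteq\mathbb{N}$ such that \[ \Big\{a+p_i\Big(\sum_{t\in F_1}f_1(t),\sum_{t\in F_2}f_2(t),\ldots,\sum_{t\in F_k}f_k(t)\Big): i=1,2,\ldots,m\Big\}\subseteq C. \]
   Context: $P_f(\mathbb{N})$ denotes the set of finite nonempty subsets of $\mathbb{N}$; the sets $F_1,\ldots,F_k$ are elements of $P_f(\mathbb{N})$ (the paper writes $F=F_1\times\cdots\times F_k\in\times_{i=1}^kP_f(\mathbb{N})$). *)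

theory Defs
  imports Main "HOL-Library.Disjoint_Sets"
begin

text \<open>A point of Z^k is a function nat => int (only entries below k matter).\<close>

definition int_poly_no_const :: "nat \<Rightarrow> ((nat \<Rightarrow> int) \<Rightarrow> int) \<Rightarrow> bool" where
  "int_poly_no_const k P \<longleftrightarrow>
     (\<exists>(S :: (nat \<Rightarrow> nat) set) (c :: (nat \<Rightarrow> nat) \<Rightarrow> int).
        finite S \<and>
        (\<forall>\<alpha>\<in>S. (\<forall>i\<ge>k. \<alpha> i = 0) \<and> \<alpha> \<noteq> (\<lambda>_. 0)) \<and>
        P = (\<lambda>x. \<Sum>\<alpha>\<in>S. c \<alpha> * (\<Prod>i<k. x i ^ \<alpha> i)))"

end

theory Submission
  imports Defs "HOL-Library.Multiset_Order"
begin



type_synonym vec = "nat \<Rightarrow> int"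

definition vadd :: "vec \<Rightarrow> vec \<Rightarrow> vec" where
  "vadd x y = (\<lambda>j. x j + y j)"

definition z0 :: vec where "z0 = (\<lambda>_. 0)"

definition dif :: "vec \<Rightarrow> (vec \<Rightarrow> int) \<Rightarrow> vec \<Rightarrow> int" where
  "dif h u = (\<lambda>x. u (vadd x h) - u x)"

fun fdeg :: "nat \<Rightarrow> (vec \<Rightarrow> int) \<Rightarrow> bool" where
  "fdeg 0 u = (\<exists>c. \<forall>x. u x = c)"
| "fdeg (Suc d) u = (\<forall>h. fdeg d (dif h u))"

lemma vadd_z0[simp]: "vadd z0 x = x" "vadd x z0 = x"
  by (auto simp: vadd_def z0_def)

lemma vadd_comm: "vadd x y = vadd y x"
  by (auto simp: vadd_def)

lemma vadd_assoc: "vadd (vadd x y) z = vadd x (vadd y z)"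
  by (auto simp: vadd_def)

lemma dif_const: "dif h (\<lambda>_. c) = (\<lambda>_. 0)"
  by (simp add: dif_def)

lemma fdeg_const: "fdeg d (\<lambda>_. c)"
proof (induction d arbitrary: c)
  case 0 show ?case by simp
next
  case (Suc d) show ?case by (simp only: fdeg.simps dif_const Suc) simp
qed

lemma fdeg_Suc: "fdeg d u \<Longrightarrow> fdeg (Suc d) u"
proof (induction d arbitrary: u)
  case 0
  then obtain c where "u = (\<lambda>_. c)" by auto
  then have "dif h u = (\<lambda>_. 0)" for h by (metis dif_const)
  then show ?case by (simp only: fdeg.simps fdeg_const) simp
next
  case (Suc d)
  then show ?case by simp
qed

lemma fdeg_mono: "fdeg d u \<Longrightarrow> d \<le> e \<Longrightarrow> fdeg e u"
proof (induction e)
  case 0 then show ?case by simp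
next
  case (Suc e)
  show ?case
  proof (cases "d = Suc e")
    case True then show ?thesis using Suc by simp
  next
    case False then have "d \<le> e" using Suc by simp
    then show ?thesis using Suc fdeg_Suc by blast
  qed
qed

lemma dif_add: "dif h (\<lambda>x. u x + v x) = (\<lambda>x. dif h u x + dif h v x)"
  by (auto simp: dif_def)
lemma dif_diff: "dif h (\<lambda>x. u x - v x) = (\<lambda>x. dif h u x - dif h v x)"
  by (auto simp: dif_def)
lemma dif_smult: "dif h (\<lambda>x. c * u x) = (\<lambda>x. c * dif h u x)"
  by (auto simp: dif_def algebra_simps)

lemma fdeg_add: "fdeg d u \<Longrightarrow> fdeg d v \<Longrightarrow> fdeg d (\<lambda>x. u x + v x)"
proof (induction d arbitrary: u v)
  case 0
  then obtain c1 c2 where "\<forall>x. u x = c1" "\<forall>x. v x = c2" by (metis fdeg.simps(1))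
  then have "\<forall>x. u x + v x = c1 + c2" by simp
  then show ?case by (metis fdeg.simps(1))
next
  case (Suc d)
  then show ?case by (simp add: dif_add)
qed
lemma fdeg_diff: "fdeg d u \<Longrightarrow> fdeg d v \<Longrightarrow> fdeg d (\<lambda>x. u x - v x)"
proof (induction d arbitrary: u v)
  case 0
  then obtain c1 c2 where "\<forall>x. u x = c1" "\<forall>x. v x = c2" by (metis fdeg.simps(1))
  then have "\<forall>x. u x - v x = c1 - c2" by simp
  then show ?case by (metis fdeg.simps(1))
next
  case (Suc d)
  then show ?case by (simp add: dif_diff)
qed
lemma fdeg_smult: "fdeg d u \<Longrightarrow> fdeg d (\<lambda>x. c * u x)"
proof (induction d arbitrary: u)
  case 0
  then obtain c1 where "\<forall>x. u x = c1" by (metis fdeg.simps(1))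
  then have "\<forall>x. c * u x = c * c1" by simp
  then show ?case by (metis fdeg.simps(1))
next
  case (Suc d)
  then show ?case by (simp add: dif_smult)
qed

lemma fdeg_shift: "fdeg d u \<Longrightarrow> fdeg d (\<lambda>x. u (vadd D x))"
proof (induction d arbitrary: u)
  case 0
  then show ?case by auto
next
  case (Suc d)
  have "dif h (\<lambda>x. u (vadd D x)) = (\<lambda>x. dif h u (vadd D x))" for h
    by (auto simp: dif_def vadd_assoc)
  then show ?case using Suc by simp
qed

lemma fdeg_mult: "fdeg a u \<Longrightarrow> fdeg b v \<Longrightarrow> fdeg (a + b) (\<lambda>x. u x * v x)"
proof (induction "a + b" arbitrary: a b u v)
  case 0
  then have a0: "a = 0" and b0: "b = 0" by auto
  obtain c1 where c1: "\<forall>x. u x = c1" using 0 a0 by (metis fdeg.simps(1))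
  obtain c2 where c2: "\<forall>x. v x = c2" using 0 b0 by (metis fdeg.simps(1))
  have "\<forall>x. u x * v x = c1 * c2" using c1 c2 by simp
  then show ?case using a0 b0 by (metis fdeg.simps(1) add_0)
next
  case (Suc n)
  note IH = Suc.hyps(1) and nsuc = Suc.hyps(2) and pu = Suc.prems(1) and pv = Suc.prems(2)
  show ?case
  proof (cases a)
    case 0
    then have "fdeg 0 u" using pu by simp
    then obtain c where "\<forall>x. u x = c" by auto
    then have "u = (\<lambda>_. c)" by auto
    then show ?thesis using fdeg_smult[OF pv, of c] 0 by simp
  next
    case (Suc a')
    note a = this
    show ?thesis
    proof (cases b)
      case 0
      then have "fdeg 0 v" using pv by simp
      then obtain c where "\<forall>x. v x = c" by auto
      then have "v = (\<lambda>_. c)" by auto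
      then show ?thesis using fdeg_smult[OF pu, of c] 0 by (simp add: mult.commute)
    next
      case (Suc b')
      note b = this
      have eq: "dif h (\<lambda>x. u x * v x) =
          (\<lambda>x. dif h u x * v (vadd h x) + u x * dif h v x)" for h
        by (rule ext) (simp add: dif_def algebra_simps vadd_comm)
      have "fdeg n (dif h (\<lambda>x. u x * v x))" for h
      proof -
        have du: "fdeg a' (dif h u)" using pu a by simp
        have dv: "fdeg b' (dif h v)" using pv b by simp
        have sv: "fdeg b (\<lambda>x. v (vadd h x))" using pv by (rule fdeg_shift)
        have n1: "n = a' + b" and n2: "n = a + b'" using nsuc a b by simp_all
        have h1: "fdeg (a' + b) (\<lambda>x. dif h u x * v (vadd h x))"
          using IH[OF n1 du sv] .
        have h2: "fdeg (a + b') (\<lambda>x. u x * dif h v x)"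
          using IH[OF n2 pu dv] .
        have h1': "fdeg n (\<lambda>x. dif h u x * v (vadd h x))" using h1 n1 by simp
        have h2': "fdeg n (\<lambda>x. u x * dif h v x)" using h2 n2 by simp
        have "fdeg n (\<lambda>x. dif h u x * v (vadd h x) + u x * dif h v x)"
          using fdeg_add[OF h1' h2'] .
        then show ?thesis unfolding eq .
      qed
      then show ?thesis unfolding nsuc[symmetric] by simp
    qed
  qed
qed

lemma fdeg_coord: "fdeg 1 (\<lambda>x. x i)"
  by (auto simp: dif_def vadd_def)

lemma fdeg_power: "fdeg e (\<lambda>x. x i ^ e)"
proof (induction e)
  case 0 then show ?case by (simp add: fdeg_const)
next
  case (Suc e)
  from fdeg_mult[OF fdeg_coord Suc] show ?case by simp
qed

lemma fdeg_prod: "finite A \<Longrightarrow> fdeg (\<Sum>i\<in>A. g i) (\<lambda>x. \<Prod>i\<in>A. x i ^ g i)"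
proof (induction A rule: finite_induct)
  case empty then show ?case by (simp add: fdeg_const)
next
  case (insert a A)
  from fdeg_mult[OF fdeg_power[of "g a" a] insert.IH] insert.hyps show ?case by simp
qed

lemma fdeg_sum: "finite S \<Longrightarrow> (\<forall>s\<in>S. fdeg d (w s)) \<Longrightarrow> fdeg d (\<lambda>x. \<Sum>s\<in>S. w s x)"
proof (induction S rule: finite_induct)
  case empty then show ?case by (simp add: fdeg_const)
next
  case (insert a A)
  then show ?case using fdeg_add[of d "w a" "\<lambda>x. \<Sum>s\<in>A. w s x"] by simp
qed

lemma poly_fdeg:
  assumes "int_poly_no_const k P"
  shows "(\<exists>d. fdeg d P) \<and> P z0 = 0"
proof -
  obtain S c where S: "finite S" "\<forall>\<alpha>\<in>S. (\<forall>i\<ge>k. \<alpha> i = 0) \<and> \<alpha> \<noteq> (\<lambda>_. 0)"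
    and P: "P = (\<lambda>x. \<Sum>\<alpha>\<in>S. c \<alpha> * (\<Prod>i<k. x i ^ \<alpha> i))"
    using assms unfolding int_poly_no_const_def by blast
  let ?d = "\<Sum>\<alpha>\<in>S. \<Sum>i<k. \<alpha> i"
  have mono: "fdeg ?d (\<lambda>x. c \<alpha> * (\<Prod>i<k. x i ^ \<alpha> i))" if "\<alpha> \<in> S" for \<alpha>
  proof -
    have "(\<Sum>i<k. \<alpha> i) \<le> ?d" using S(1) that member_le_sum[of \<alpha> S "\<lambda>\<alpha>. sum \<alpha> {..<k}"] by auto
    then show ?thesis using fdeg_smult[OF fdeg_prod[of "{..<k}" \<alpha>]] fdeg_mono by blast
  qed
  have "fdeg ?d P" unfolding P
    using fdeg_sum[OF S(1), where w="\<lambda>\<alpha> x. c \<alpha> * (\<Prod>i<k. x i ^ \<alpha> i)" and d="?d"] mono by simp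
  moreover have "P z0 = 0"
  proof -
    have "(\<Prod>i<k. z0 i ^ \<alpha> i) = 0" if aS: "\<alpha> \<in> S" for \<alpha>
    proof -
      obtain i where "\<alpha> i \<noteq> 0" using S(2) aS by fastforce
      then have "i < k" using S(2) aS by (meson not_le)
      then show ?thesis using \<open>\<alpha> i \<noteq> 0\<close> by (auto simp: z0_def intro!: prod_zero)
    qed
    then have pz: "\<forall>\<alpha>\<in>S. c \<alpha> * (\<Prod>i<k. z0 i ^ \<alpha> i) = 0" by (metis mult_zero_right)
    have "P z0 = (\<Sum>\<alpha>\<in>S. c \<alpha> * (\<Prod>i<k. z0 i ^ \<alpha> i))" by (simp only: P)
    also have "\<dots> = 0" by (rule sum.neutral) (rule pz)
    finally show ?thesis .
  qed
  ultimately show ?thesis by blast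
qed




declare fdeg.simps[simp del]

definition fin :: "(vec \<Rightarrow> int) \<Rightarrow> bool" where "fin u \<longleftrightarrow> (\<exists>d. fdeg d u)"

definition deg :: "(vec \<Rightarrow> int) \<Rightarrow> nat" where "deg u = (LEAST d. fdeg d u)"

lemma deg_fdeg: "fdeg d u \<Longrightarrow> fdeg (deg u) u"
  unfolding deg_def by (rule LeastI)

lemma deg_le: "fdeg d u \<Longrightarrow> deg u \<le> d"
  unfolding deg_def by (rule Least_le)

lemma fin_deg: "fin u \<Longrightarrow> fdeg (deg u) u"
  unfolding fin_def using deg_fdeg by blast

lemma fdeg_iff_deg: "fin u \<Longrightarrow> fdeg e u \<longleftrightarrow> deg u \<le> e"
  using fin_deg deg_le fdeg_mono by blast

lemma deg_eqI: "fdeg (Suc e) u \<Longrightarrow> \<not> fdeg e u \<Longrightarrow> deg u = Suc e"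
proof -
  assume a: "fdeg (Suc e) u" "\<not> fdeg e u"
  have "deg u \<le> Suc e" using deg_le[OF a(1)] .
  moreover have "\<not> deg u \<le> e" using fdeg_mono[OF deg_fdeg[OF a(1)]] a(2) by blast
  ultimately show ?thesis by simp
qed

lemma deg_Suc_not: "fin u \<Longrightarrow> deg u = Suc e \<Longrightarrow> \<not> fdeg e u"
  using fdeg_iff_deg by fastforce

fun iterd :: "vec list \<Rightarrow> (vec \<Rightarrow> int) \<Rightarrow> vec \<Rightarrow> int" where
  "iterd [] u = u"
| "iterd (h # hs) u = iterd hs (dif h u)"

lemma iterd_snoc: "iterd (hs @ [h]) u = dif h (iterd hs u)"
  by (induction hs arbitrary: u) auto

lemma iterd_diff: "iterd hs (\<lambda>x. u x - v x) = (\<lambda>x. iterd hs u x - iterd hs v x)"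
  by (induction hs arbitrary: u v) (auto simp: dif_diff)

definition "isconst w \<longleftrightarrow> (\<exists>c. \<forall>x. w x = c)"

lemma fdeg_iff: "fdeg d u \<longleftrightarrow> (\<forall>hs. length hs = d \<longrightarrow> isconst (iterd hs u))"
proof (induction d arbitrary: u)
  case 0
  then show ?case by (simp add: fdeg.simps isconst_def)
next
  case (Suc d)
  have "fdeg (Suc d) u \<longleftrightarrow> (\<forall>h. fdeg d (dif h u))" by (simp add: fdeg.simps)
  also have "\<dots> \<longleftrightarrow> (\<forall>h hs. length hs = d \<longrightarrow> isconst (iterd (h # hs) u))"
    using Suc by simp
  also have "\<dots> \<longleftrightarrow> (\<forall>hs. length hs = Suc d \<longrightarrow> isconst (iterd hs u))"
    by (metis length_Suc_conv)
  finally show ?case .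
qed

lemma isconst_dif: "isconst w \<longleftrightarrow> (\<forall>h x. dif h w x = 0)"
proof
  assume "isconst w" then show "\<forall>h x. dif h w x = 0" by (auto simp: isconst_def dif_def)
next
  assume a: "\<forall>h x. dif h w x = 0"
  have "w x = w z0" for x using a[rule_format, of x z0] by (simp add: dif_def)
  then show "isconst w" unfolding isconst_def by blast
qed

definition lf :: "nat \<Rightarrow> (vec \<Rightarrow> int) \<Rightarrow> vec list \<Rightarrow> int" where
  "lf d u = (\<lambda>hs. if length hs = d then iterd hs u z0 else 0)"

lemma lf_diff: "lf d (\<lambda>x. u x - v x) = (\<lambda>hs. lf d u hs - lf d v hs)"
  by (auto simp: lf_def iterd_diff)

lemma lf_zero_iff:
  assumes "fdeg (Suc d) u"
  shows "fdeg d u \<longleftrightarrow> lf (Suc d) u = (\<lambda>_. 0)"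
proof -
  have cS: "isconst (iterd hs u)" if "length hs = Suc d" for hs
    using iffD1[OF fdeg_iff assms] that by blast
  show ?thesis
  proof
    assume a: "fdeg d u"
    show "lf (Suc d) u = (\<lambda>_. 0)"
    proof
      fix hs :: "vec list"
      show "lf (Suc d) u hs = 0"
      proof (cases "length hs = Suc d")
        case True
        then obtain hs' h where hs: "hs = hs' @ [h]" and l: "length hs' = d"
          by (metis length_Suc_conv_rev)
        have "isconst (iterd hs' u)" using iffD1[OF fdeg_iff a] l by blast
        then have "dif h (iterd hs' u) z0 = 0" unfolding isconst_dif by blast
        then show ?thesis using True by (simp add: lf_def hs iterd_snoc)
      qed (simp add: lf_def)
    qed
  next
    assume a: "lf (Suc d) u = (\<lambda>_. 0)"
    have "isconst (iterd hs' u)" if l: "length hs' = d" for hs'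
    proof -
      have "dif h (iterd hs' u) x = 0" for h x
      proof -
        have l2: "length (hs' @ [h]) = Suc d" using l by simp
        have "iterd (hs' @ [h]) u z0 = 0" using fun_cong[OF a, of "hs' @ [h]"] l2
          by (simp add: lf_def)
        moreover obtain c where "\<forall>x. iterd (hs' @ [h]) u x = c" using cS[OF l2] unfolding isconst_def by blast
        ultimately show ?thesis unfolding iterd_snoc by simp
      qed
      then show ?thesis unfolding isconst_dif by blast
    qed
    then show "fdeg d u" using fdeg_iff by blast
  qed
qed

definition nice :: "(vec \<Rightarrow> int) \<Rightarrow> bool" where
  "nice u \<longleftrightarrow> fin u \<and> u z0 = 0 \<and> (\<exists>x. u x \<noteq> 0)"

lemma nice_deg: "nice u \<Longrightarrow> deg u \<ge> 1"
proof (rule ccontr)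
  assume n: "nice u" and "\<not> deg u \<ge> 1"
  then have "deg u = 0" by simp
  moreover have "fdeg (deg u) u" using fin_deg[of u] n by (simp add: nice_def)
  ultimately have "fdeg 0 u" by simp
  then obtain c where c: "\<forall>x. u x = c" by (auto simp: fdeg.simps)
  then show False using n by (auto simp: nice_def)
qed

lemma key_G1:
  assumes w1: "fdeg (Suc e) w" and w2: "\<not> fdeg e w" and hw: "fdeg e (\<lambda>x. h x - w x)"
  shows "deg h = Suc e \<and> lf (Suc e) h = lf (Suc e) w \<and> fin h \<and> fdeg (Suc e) h \<and> \<not> fdeg e h"
proof -
  have hw': "fdeg (Suc e) (\<lambda>x. h x - w x)" using fdeg_Suc[OF hw] .
  have "fdeg (Suc e) (\<lambda>x. (h x - w x) + w x)" using fdeg_add[OF hw' w1] .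
  then have h1: "fdeg (Suc e) h" by simp
  have h2: "\<not> fdeg e h"
  proof
    assume "fdeg e h"
    then have "fdeg e (\<lambda>x. h x - (h x - w x))" using fdeg_diff[OF _ hw] by blast
    then show False using w2 by simp
  qed
  have "lf (Suc e) (\<lambda>x. h x - w x) = (\<lambda>_. 0)" using lf_zero_iff[OF hw'] hw by blast
  then have z: "(\<lambda>hs. lf (Suc e) h hs - lf (Suc e) w hs) = (\<lambda>_. 0)" unfolding lf_diff .
  have "lf (Suc e) h hs = lf (Suc e) w hs" for hs using fun_cong[OF z, of hs] by simp
  then have "lf (Suc e) h = lf (Suc e) w" by (rule ext)
  then show ?thesis using deg_eqI[OF h1 h2] h1 h2 fin_def by blast
qed




definition kap :: "(vec \<Rightarrow> int) \<Rightarrow> nat \<times> (vec list \<Rightarrow> int)" where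
  "kap u = (deg u, lf (deg u) u)"

definition W :: "(vec \<Rightarrow> int) set \<Rightarrow> nat multiset" where
  "W P = image_mset fst (mset_set (kap ` P))"

definition phi :: "(vec \<Rightarrow> int) \<Rightarrow> nat \<times> (vec list \<Rightarrow> int) \<Rightarrow> nat \<times> (vec list \<Rightarrow> int)" where
  "phi p1 x = (if fst x = deg p1 then (fst x, \<lambda>hs. snd x hs - lf (deg p1) p1 hs) else x)"

lemma phi_inj: "inj_on (phi p1) A"
proof
  fix x y assume e: "phi p1 x = phi p1 y"
  show "x = y"
  proof (cases "fst x = deg p1")
    case True
    then have "fst y = deg p1" using e by (auto simp: phi_def split: if_splits)
    then have eq: "(\<lambda>hs. snd x hs - lf (deg p1) p1 hs) = (\<lambda>hs. snd y hs - lf (deg p1) p1 hs)"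
      using e True by (simp add: phi_def)
    have "snd x hs = snd y hs" for hs using fun_cong[OF eq, of hs] by simp
    then show ?thesis using True \<open>fst y = deg p1\<close> by (simp add: prod_eq_iff ext)
  next
    case False
    then have "fst y \<noteq> deg p1" using e by (auto simp: phi_def split: if_splits)
    then show ?thesis using e False by (simp add: phi_def)
  qed
qed

lemma fst_phi[simp]: "fst (phi p1 x) = fst x"
  by (simp add: phi_def)

lemma nice_fdeg_deg: "nice u \<Longrightarrow> fdeg (deg u) u"
  using fin_deg nice_def by blast

lemma key_G2:
  assumes P: "\<forall>u\<in>P. nice u" and p1: "p1 \<in> P" and min: "\<forall>q\<in>P. deg p1 \<le> deg q"
    and q: "q \<in> P" "q \<noteq> p1"
  defines "w \<equiv> (\<lambda>x. q x - p1 x)"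
  shows "nice w \<and> (deg w < deg p1 \<or> (kap w = phi p1 (kap q) \<and> kap q \<noteq> kap p1))"
proof -
  have nq: "nice q" and np: "nice p1" using P q p1 by auto
  define dq where "dq = deg q"
  have d1: "deg p1 \<ge> 1" using nice_deg[OF np] .
  have dq1: "deg p1 \<le> dq" using min q unfolding dq_def by blast
  then obtain e where e: "dq = Suc e" using d1 by (cases dq) auto
  have fq: "fdeg dq q" using nice_fdeg_deg[OF nq] unfolding dq_def .
  have fp: "fdeg dq p1" using fdeg_mono[OF nice_fdeg_deg[OF np] dq1] .
  have fw: "fdeg dq w" unfolding w_def using fdeg_diff[OF fq fp] .
  have nw: "nice w"
  proof -
    have "fin w" using fw fin_def by blast
    moreover have "w z0 = 0" using nq np by (simp add: w_def nice_def)
    moreover have "\<exists>x. w x \<noteq> 0"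
    proof (rule ccontr)
      assume "\<not> (\<exists>x. w x \<noteq> 0)"
      then have "q = p1" by (auto simp: w_def fun_eq_iff)
      then show False using q by simp
    qed
    ultimately show ?thesis by (simp add: nice_def)
  qed
  have nfq: "\<not> fdeg e q" using deg_Suc_not[of q e] nq e unfolding dq_def nice_def by blast
  have lfw: "lf dq w = (\<lambda>hs. lf dq q hs - lf dq p1 hs)" unfolding w_def lf_diff ..
  show ?thesis
  proof (cases "deg p1 < dq")
    case True
    have fpe: "fdeg e p1" using fdeg_mono[OF nice_fdeg_deg[OF np]] True e by simp
    have nfw: "\<not> fdeg e w"
    proof
      assume "fdeg e w"
      then have "fdeg e (\<lambda>x. w x + p1 x)" using fdeg_add fpe by blast
      then have "fdeg e q" by (simp add: w_def)
      then show False using nfq by simp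
    qed
    have dw: "deg w = dq" using deg_eqI[of e w] fw nfw e by simp
    have "lf dq p1 = (\<lambda>_. 0)" using lf_zero_iff[of e p1] fpe fp e by simp
    then have "lf dq w = lf dq q" using lfw by simp
    then have "kap w = kap q" using dw by (simp add: kap_def dq_def)
    moreover have "phi p1 (kap q) = kap q" using True by (simp add: phi_def kap_def dq_def)
    moreover have "kap q \<noteq> kap p1" using True by (auto simp: kap_def dq_def)
    ultimately show ?thesis using nw by simp
  next
    case False
    then have dqe: "deg p1 = dq" using dq1 by simp
    show ?thesis
    proof (cases "fdeg e w")
      case True
      then have "deg w < deg p1" using deg_le[OF True] e dqe by simp
      then show ?thesis using nw by simp
    next
      case nfw: False
      have dw: "deg w = dq" using deg_eqI[of e w] fw nfw e by simp
      have "kap w = phi p1 (kap q)" using dw dqe lfw by (simp add: kap_def phi_def dq_def)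
      moreover have "kap q \<noteq> kap p1"
      proof
        assume "kap q = kap p1"
        then have "lf dq q = lf dq p1" using dqe by (simp add: kap_def dq_def)
        then have "lf (Suc e) w = (\<lambda>_. 0)" using lfw e by simp
        then have "fdeg e w" using lf_zero_iff[of e w] fw e by simp
        then show False using nfw by simp
      qed
      ultimately show ?thesis using nw by simp
    qed
  qed
qed

lemma key_G3:
  fixes D :: vec
  assumes nw: "nice w"
  defines "h \<equiv> (\<lambda>x. w (vadd D x) - w D)"
  shows "nice h \<and> kap h = kap w"
proof -
  obtain e where e: "deg w = Suc e" using nice_deg[OF nw] by (cases "deg w") auto
  have fw: "fdeg (Suc e) w" using nice_fdeg_deg[OF nw] e by simp
  have nfw: "\<not> fdeg e w" using deg_Suc_not[of w e] nw e unfolding nice_def by blast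
  have fd: "fdeg e (dif D w)" using fw by (simp add: fdeg.simps)
  have "fdeg e (\<lambda>x. dif D w x - w D)" using fdeg_diff[OF fd fdeg_const] .
  moreover have "(\<lambda>x. dif D w x - w D) = (\<lambda>x. h x - w x)"
    by (auto simp: h_def dif_def vadd_comm)
  ultimately have hw: "fdeg e (\<lambda>x. h x - w x)" by simp
  from key_G1[OF fw nfw hw] have G: "deg h = Suc e" "lf (Suc e) h = lf (Suc e) w" "fin h"
    by auto
  have "kap h = kap w" using G e by (simp add: kap_def)
  moreover have "h z0 = 0" by (simp add: h_def)
  moreover have "\<exists>x. h x \<noteq> 0"
  proof (rule ccontr)
    assume "\<not> (\<exists>x. h x \<noteq> 0)"
    then have "fdeg 0 h" by (auto simp: fdeg.simps)
    then show False using deg_le[of 0 h] G by simp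
  qed
  ultimately show ?thesis using G by (simp add: nice_def)
qed

lemma W_less:
  assumes P: "finite P" "\<forall>u\<in>P. nice u" and p1: "p1 \<in> P" and min: "\<forall>q\<in>P. deg p1 \<le> deg q"
    and Q: "finite Q" "\<forall>h\<in>Q. \<exists>q\<in>P - {p1}. kap h = kap (\<lambda>x. q x - p1 x)"
  shows "W Q < W P"
proof -
  define d1 where "d1 = deg p1"
  define KP where "KP = kap ` P"
  define A where "A = {x \<in> kap ` Q. fst x \<ge> d1}"
  define B where "B = {x \<in> kap ` Q. fst x < d1}"
  have fKP: "finite KP" using P by (simp add: KP_def)
  have kp1: "kap p1 \<in> KP" using p1 by (simp add: KP_def)
  have fA: "finite A" and fB: "finite B" using Q by (auto simp: A_def B_def)
  have AB: "kap ` Q = A \<union> B" "A \<inter> B = {}" by (auto simp: A_def B_def)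
  have Asub: "A \<subseteq> phi p1 ` (KP - {kap p1})"
  proof
    fix x assume xA: "x \<in> A"
    then obtain h where h: "h \<in> Q" "x = kap h" and fx: "fst x \<ge> d1" by (auto simp: A_def)
    obtain q where q: "q \<in> P" "q \<noteq> p1" and kh: "kap h = kap (\<lambda>x. q x - p1 x)" using Q h by blast
    from key_G2[OF P(2) p1 min q] kh h fx
    have "kap h = phi p1 (kap q) \<and> kap q \<noteq> kap p1" by (auto simp: kap_def d1_def)
    then show "x \<in> phi p1 ` (KP - {kap p1})" using h q by (auto simp: KP_def)
  qed
  have Bfst: "\<forall>x\<in>B. fst x < d1" by (auto simp: B_def)
  define MA where "MA = image_mset fst (mset_set A)"
  define MB where "MB = image_mset fst (mset_set B)"
  have WQ: "W Q = MA + MB"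
    unfolding W_def MA_def MB_def AB(1) using mset_set_Union[OF fA fB AB(2)] by simp
  have "mset_set A \<subseteq># mset_set (phi p1 ` (KP - {kap p1}))"
    using subset_imp_msubset_mset_set[OF Asub] fKP by simp
  then have "MA \<subseteq># image_mset fst (mset_set (phi p1 ` (KP - {kap p1})))"
    unfolding MA_def by (rule image_mset_subseteq_mono)
  also have "image_mset fst (mset_set (phi p1 ` (KP - {kap p1})))
      = image_mset fst (image_mset (phi p1) (mset_set (KP - {kap p1})))"
    using image_mset_mset_set[OF phi_inj, of p1 "KP - {kap p1}"] by simp
  also have "\<dots> = image_mset fst (mset_set (KP - {kap p1}))"
    by (simp add: multiset.map_comp comp_def)
  also have "\<dots> = image_mset fst (mset_set KP - {#kap p1#})"
    using mset_set_Diff[OF fKP, of "{kap p1}"] kp1 by simp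
  also have "\<dots> = W P - {#d1#}"
    unfolding W_def KP_def[symmetric]
    using image_mset_Diff[of "{#kap p1#}" "mset_set KP" fst] kp1 fKP
    by (simp add: kap_def d1_def)
  finally have MAsub: "MA \<subseteq># W P - {#d1#}" .
  have "kap p1 \<in># mset_set KP" using kp1 fKP by simp
  then have "fst (kap p1) \<in># image_mset fst (mset_set KP)" by simp
  then have d1W: "d1 \<in># W P"
    unfolding W_def KP_def[symmetric] by (simp add: kap_def d1_def)
  have cMA: "count MA d1 \<le> count (W P - {#d1#}) d1"
    using mset_subset_eq_count[OF MAsub] .
  have cW: "count (W P) d1 > 0" using d1W by simp
  have "count (W P - {#d1#}) d1 = count (W P) d1 - 1" by simp
  then have "count MA d1 < count (W P) d1" using cMA cW by linarith
  then have d1X: "d1 \<in># W P - MA" by (simp add: in_diff_count)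
  have MAW: "MA \<subseteq># W P" using subset_mset.order_trans[OF MAsub diff_subset_eq_self] .
  have dd: "W P - (W P - MA) = MA"
  proof (rule multiset_eqI)
    fix x show "count (W P - (W P - MA)) x = count MA x"
      using mset_subset_eq_count[OF MAW, of x] by simp
  qed
  show ?thesis
    unfolding less_multiset\<^sub>D\<^sub>M
  proof (intro exI conjI)
    let ?X = "W P - MA"
    show "?X \<noteq> {#}" using d1X by auto
    show "?X \<subseteq># W P" by simp
    show "W Q = W P - ?X + MB" using WQ dd by simp
    show "\<forall>k. k \<in># MB \<longrightarrow> (\<exists>a. a \<in># ?X \<and> k < a)"
    proof (intro allI impI)
      fix k assume "k \<in># MB"
      then have "k < d1" using Bfst fB by (auto simp: MB_def)
      then show "\<exists>a. a \<in># ?X \<and> k < a" using d1X by blast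
    qed
  qed
qed




context
  fixes f :: "nat \<Rightarrow> nat \<Rightarrow> int" and k :: nat
begin

definition ipv :: "(nat \<Rightarrow> nat set) \<Rightarrow> vec" where
  "ipv G = (\<lambda>j. \<Sum>t\<in>G j. f j t)"

definition valid :: "nat \<Rightarrow> nat \<Rightarrow> (nat \<Rightarrow> nat set) \<Rightarrow> bool" where
  "valid N M G \<longleftrightarrow> (\<forall>j. (j < k \<longrightarrow> G j \<noteq> {} \<and> G j \<subseteq> {N<..M}) \<and> (k \<le> j \<longrightarrow> G j = {}))"

lemma valid_mono: "valid N M G \<Longrightarrow> M \<le> M' \<Longrightarrow> N' \<le> N \<Longrightarrow> valid N' M' G"
proof -
  assume v: "valid N M G" and m: "M \<le> M'" "N' \<le> N"
  have "{N<..M} \<subseteq> {N'<..M'}" using m by auto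
  then show ?thesis using v unfolding valid_def by blast
qed

lemma valid_union:
  assumes v1: "valid N M G" and v2: "valid M M' G'"
  shows "valid N M' (\<lambda>j. G j \<union> G' j) \<and> ipv (\<lambda>j. G j \<union> G' j) = vadd (ipv G) (ipv G')"
proof
  have NM: "N < M" if jk: "j < k" for j
  proof -
    obtain x where x: "x \<in> G j" using v1 jk unfolding valid_def by blast
    have "G j \<subseteq> {N<..M}" using v1 jk unfolding valid_def by blast
    then show ?thesis using x by auto
  qed
  show "valid N M' (\<lambda>j. G j \<union> G' j)"
    unfolding valid_def
  proof (intro allI conjI impI)
    fix j assume j: "j < k"
    show "G j \<union> G' j \<noteq> {}" using v1 j unfolding valid_def by blast
    have "G j \<subseteq> {N<..M}" "G' j \<subseteq> {M<..M'}" using v1 v2 j unfolding valid_def by blast+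
    moreover have "M \<le> M'" using v2 j unfolding valid_def
      by (metis greaterThanAtMost_empty_iff2 order.strict_implies_order subset_empty)
    ultimately show "G j \<union> G' j \<subseteq> {N<..M'}" using NM[OF j] by auto
  next
    fix j assume "k \<le> j"
    then show "G j \<union> G' j = {}" using v1 v2 unfolding valid_def by blast
  qed
  show "ipv (\<lambda>j. G j \<union> G' j) = vadd (ipv G) (ipv G')"
  proof
    fix j
    have "G j \<inter> G' j = {} \<and> finite (G j) \<and> finite (G' j)"
    proof (cases "j < k")
      case True
      then have "G j \<subseteq> {N<..M}" "G' j \<subseteq> {M<..M'}" using v1 v2 unfolding valid_def by blast+
      then show ?thesis using finite_subset by fastforce
    next
      case False
      then have "G j = {}" "G' j = {}" using v1 v2 unfolding valid_def by auto
      then show ?thesis by simp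
    qed
    then show "ipv (\<lambda>j. G j \<union> G' j) j = vadd (ipv G) (ipv G') j"
      by (simp add: ipv_def vadd_def sum.union_disjoint)
  qed
qed

lemma valid_finite: "finite {G. valid N M G}"
proof -
  have "{G. valid N M G} \<subseteq> {G. \<forall>x. (x \<in> {..<k} \<longrightarrow> G x \<in> Pow {N<..M}) \<and> (x \<notin> {..<k} \<longrightarrow> G x = {})}"
    unfolding valid_def by auto
  moreover have "finite {G. \<forall>x. (x \<in> {..<k} \<longrightarrow> G x \<in> Pow {N<..M}) \<and> (x \<notin> {..<k} \<longrightarrow> G x = {})}"
    by (rule finite_set_of_finite_funs) auto
  ultimately show ?thesis by (rule finite_subset)
qed

lemma valid_ex: "valid N (Suc N) (\<lambda>j. if j < k then {Suc N} else {})"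
  unfolding valid_def by auto

definition sol :: "(vec \<Rightarrow> int) set \<Rightarrow> (int \<Rightarrow> nat) \<Rightarrow> nat \<Rightarrow> nat \<Rightarrow> bool" where
  "sol P \<chi> N M \<longleftrightarrow> (\<exists>a G. valid N M G \<and> \<bar>a\<bar> \<le> int M \<and> (\<forall>p\<in>P. \<bar>a + p (ipv G)\<bar> \<le> int M) \<and>
      (\<forall>p\<in>P. \<forall>p'\<in>P. \<chi> (a + p (ipv G)) = \<chi> (a + p' (ipv G))))"

definition good :: "(vec \<Rightarrow> int) set \<Rightarrow> bool" where
  "good P \<longleftrightarrow> (\<forall>c N. \<exists>M. \<forall>\<chi>. (\<forall>x. \<chi> x < c) \<longrightarrow> sol P \<chi> N M)"

lemma sol_mono: "sol P \<chi> N M \<Longrightarrow> M \<le> M' \<Longrightarrow> sol P \<chi> N M'"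
  unfolding sol_def
proof (elim exE conjE)
  fix a G assume a: "valid N M G" "\<bar>a\<bar> \<le> int M" "\<forall>p\<in>P. \<bar>a + p (ipv G)\<bar> \<le> int M"
    "\<forall>p\<in>P. \<forall>p'\<in>P. \<chi> (a + p (ipv G)) = \<chi> (a + p' (ipv G))" and M: "M \<le> M'"
  have "valid N M' G" using valid_mono[OF a(1) M] by simp
  moreover have "\<bar>a\<bar> \<le> int M'" using a(2) M by simp
  moreover have "\<forall>p\<in>P. \<bar>a + p (ipv G)\<bar> \<le> int M'" using a(3) M by force
  ultimately show "\<exists>a G. valid N M' G \<and> \<bar>a\<bar> \<le> int M' \<and> (\<forall>p\<in>P. \<bar>a + p (ipv G)\<bar> \<le> int M') \<and>
      (\<forall>p\<in>P. \<forall>p'\<in>P. \<chi> (a + p (ipv G)) = \<chi> (a + p' (ipv G)))" using a(4) by blast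
qed

lemma sol_shift:
  assumes s: "sol P (\<lambda>x. \<chi> (t + x)) N M" and t: "\<bar>t\<bar> \<le> int M'"
  shows "sol P \<chi> N (M + M')"
proof -
  obtain a G where a: "valid N M G" "\<bar>a\<bar> \<le> int M" "\<forall>p\<in>P. \<bar>a + p (ipv G)\<bar> \<le> int M"
    "\<forall>p\<in>P. \<forall>p'\<in>P. \<chi> (t + (a + p (ipv G))) = \<chi> (t + (a + p' (ipv G)))"
    using s unfolding sol_def by blast
  have "valid N (M + M') G" using valid_mono[OF a(1)] by simp
  moreover have "\<bar>t + a\<bar> \<le> int (M + M')" using a(2) t by linarith
  moreover have "\<forall>p\<in>P. \<bar>t + a + p (ipv G)\<bar> \<le> int (M + M')"
  proof
    fix p assume "p \<in> P"
    then have "\<bar>a + p (ipv G)\<bar> \<le> int M" using a(3) by blast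
    moreover have "\<bar>t + (a + p (ipv G))\<bar> \<le> \<bar>t\<bar> + \<bar>a + p (ipv G)\<bar>" by (rule abs_triangle_ineq)
    ultimately show "\<bar>t + a + p (ipv G)\<bar> \<le> int (M + M')" using t by (simp only: add.assoc)
  qed
  moreover have "\<forall>p\<in>P. \<forall>p'\<in>P. \<chi> (t + a + p (ipv G)) = \<chi> (t + a + p' (ipv G))"
    using a(4) by (metis add.assoc)
  ultimately show ?thesis unfolding sol_def by blast
qed

lemma good_small:
  assumes "P \<subseteq> {p}"
  shows "good P"
  unfolding good_def
proof (intro allI)
  fix c N
  define G0 where "G0 = (\<lambda>j. if j < k then {Suc N} else ({}::nat set))"
  define M where "M = Suc N + nat \<bar>p (ipv G0)\<bar>"
  have v: "valid N M G0" using valid_mono[OF valid_ex[of N]] unfolding G0_def M_def by simp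
  have "sol P \<chi> N M" for \<chi>
    unfolding sol_def
  proof (intro exI conjI)
    show "valid N M G0" by (rule v)
    show "\<bar>0::int\<bar> \<le> int M" by simp
    show "\<forall>q\<in>P. \<bar>0 + q (ipv G0)\<bar> \<le> int M" using assms by (auto simp: M_def)
    show "\<forall>q\<in>P. \<forall>q'\<in>P. \<chi> (0 + q (ipv G0)) = \<chi> (0 + q' (ipv G0))" using assms by auto
  qed
  then show "\<exists>M. \<forall>\<chi>. (\<forall>x. \<chi> x < c) \<longrightarrow> sol P \<chi> N M" by blast
qed

end




definition cfg :: "(nat \<Rightarrow> nat \<Rightarrow> int) \<Rightarrow> nat \<Rightarrow> (vec \<Rightarrow> int) set \<Rightarrow> (vec \<Rightarrow> int) \<Rightarrow> (int \<Rightarrow> nat)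
    \<Rightarrow> nat \<Rightarrow> nat \<Rightarrow> nat \<Rightarrow> int \<Rightarrow> (nat \<Rightarrow> nat \<Rightarrow> nat set) \<Rightarrow> (nat \<Rightarrow> nat) \<Rightarrow> bool" where
  "cfg f k P p1 \<chi> N M r a Gs col \<longleftrightarrow> \<bar>a\<bar> \<le> int M \<and> \<chi> a \<notin> col ` {..<r} \<and> inj_on col {..<r} \<and>
     (\<forall>i<r. valid k N M (Gs i) \<and> (\<forall>q\<in>P - {p1}.
        \<bar>a + q (ipv f (Gs i)) - p1 (ipv f (Gs i))\<bar> \<le> int M \<and>
        \<chi> (a + q (ipv f (Gs i)) - p1 (ipv f (Gs i))) = col i))"

definition cl :: "(nat \<Rightarrow> nat \<Rightarrow> int) \<Rightarrow> nat \<Rightarrow> (vec \<Rightarrow> int) set \<Rightarrow> (vec \<Rightarrow> int) \<Rightarrow> nat \<Rightarrow> nat \<Rightarrow> bool" where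
  "cl f k P p1 c r \<longleftrightarrow> (\<forall>N. \<exists>M. \<forall>\<chi>. (\<forall>x. \<chi> x < c) \<longrightarrow>
      sol f k P \<chi> N M \<or> (\<exists>a Gs col. cfg f k P p1 \<chi> N M r a Gs col))"

lemma cfg_mono: "cfg f k P p1 \<chi> N M r a Gs col \<Longrightarrow> M \<le> M' \<Longrightarrow> cfg f k P p1 \<chi> N M' r a Gs col"
proof -
  assume c: "cfg f k P p1 \<chi> N M r a Gs col" and m: "M \<le> M'"
  have mi: "int M \<le> int M'" using m by simp
  show ?thesis unfolding cfg_def
  proof (intro conjI allI impI ballI)
    show "\<bar>a\<bar> \<le> int M'" using c mi unfolding cfg_def by linarith
    show "\<chi> a \<notin> col ` {..<r}" "inj_on col {..<r}" using c unfolding cfg_def by auto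
    fix i assume i: "i < r"
    show "valid k N M' (Gs i)" using c i valid_mono[OF _ m order_refl] unfolding cfg_def by blast
    fix q assume q: "q \<in> P - {p1}"
    have "\<bar>a + q (ipv f (Gs i)) - p1 (ipv f (Gs i))\<bar> \<le> int M" using c i q unfolding cfg_def by blast
    then show "\<bar>a + q (ipv f (Gs i)) - p1 (ipv f (Gs i))\<bar> \<le> int M'" using mi by linarith
    show "\<chi> (a + q (ipv f (Gs i)) - p1 (ipv f (Gs i))) = col i" using c i q unfolding cfg_def by blast
  qed
qed

lemma cl_0: "cl f k P p1 c 0"
  unfolding cl_def
proof (intro allI)
  fix N
  show "\<exists>M. \<forall>\<chi>. (\<forall>x. \<chi> x < c) \<longrightarrow> sol f k P \<chi> N M \<or> (\<exists>a Gs col. cfg f k P p1 \<chi> N M 0 a Gs col)"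
  proof (rule exI[of _ 0], intro allI impI disjI2)
    fix \<chi> :: "int \<Rightarrow> nat"
    show "\<exists>a Gs col. cfg f k P p1 \<chi> N 0 0 a Gs col"
      by (rule exI[of _ 0]) (simp add: cfg_def)
  qed
qed


lemma cl_step:
  assumes P: "finite P" "\<forall>u\<in>P. nice u" and p1: "p1 \<in> P" and min: "\<forall>q\<in>P. deg p1 \<le> deg q"
    and Pm_ne: "P - {p1} \<noteq> {}"
    and IH: "\<And>Q. finite Q \<Longrightarrow> \<forall>u\<in>Q. nice u \<Longrightarrow> W Q < W P \<Longrightarrow> good f k Q"
    and cr: "cl f k P p1 c r"
  shows "cl f k P p1 c (Suc r)"
  unfolding cl_def
proof (intro allI)
  fix N
  obtain M0 where M0: "\<forall>\<chi>::int \<Rightarrow> nat. (\<forall>x. \<chi> x < c) \<longrightarrow> sol f k P \<chi> N M0 \<or> (\<exists>a Gs col. cfg f k P p1 \<chi> N M0 r a Gs col)"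
    using cr unfolding cl_def by blast
  define M where "M = max M0 N"
  have M0M: "M0 \<le> M" and NM: "N \<le> M" by (simp_all add: M_def)
  have HM: "sol f k P \<chi> N M \<or> (\<exists>a Gs col. cfg f k P p1 \<chi> N M r a Gs col)" if chc: "\<forall>x. \<chi> x < c" for \<chi>
  proof -
    have "sol f k P \<chi> N M0 \<or> (\<exists>a Gs col. cfg f k P p1 \<chi> N M0 r a Gs col)" using M0 chc by blast
    then show ?thesis
    proof
      assume "sol f k P \<chi> N M0" then show ?thesis using sol_mono[OF _ M0M] by blast
    next
      assume "\<exists>a Gs col. cfg f k P p1 \<chi> N M0 r a Gs col"
      then obtain a Gs col where "cfg f k P p1 \<chi> N M0 r a Gs col" by blast
      then have "cfg f k P p1 \<chi> N M r a Gs col" using cfg_mono[OF _ M0M] by blast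
      then show ?thesis by blast
    qed
  qed
  define Win where "Win = {-int M..int M}"
  define Pat where "Pat = {\<pi> :: int \<Rightarrow> nat. \<forall>s. (s \<in> Win \<longrightarrow> \<pi> s \<in> {..<c}) \<and> (s \<notin> Win \<longrightarrow> \<pi> s = 0)}"
  have fPat: "finite Pat" unfolding Pat_def by (rule finite_set_of_finite_funs) (auto simp: Win_def)
  obtain e :: "(int \<Rightarrow> nat) \<Rightarrow> nat" and n :: nat where e: "e ` Pat = {i. i < n}" "inj_on e Pat"
    using finite_imp_inj_to_nat_seg[OF fPat] by blast
  define pat where "pat \<chi> x = (\<lambda>s. if s \<in> Win then \<chi> (x + s) else (0::nat))" for \<chi> :: "int \<Rightarrow> nat" and x
  define Pm where "Pm = P - {p1}"
  define Dset where "Dset = ipv f ` {G. valid k N M G}"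
  define Q where "Q = (\<lambda>q x. q x - p1 x) ` Pm \<union>
      (\<lambda>(D, q) x. (q (vadd D x) - p1 (vadd D x)) - (q D - p1 D)) ` (Dset \<times> Pm)"
  have fQ: "finite Q" using P(1) valid_finite unfolding Q_def Dset_def Pm_def by auto
  have Qprop: "\<forall>h\<in>Q. nice h \<and> (\<exists>q\<in>P - {p1}. kap h = kap (\<lambda>x. q x - p1 x))"
  proof
    fix h assume "h \<in> Q"
    then consider (a) q where "q \<in> Pm" "h = (\<lambda>x. q x - p1 x)"
      | (b) D q where "q \<in> Pm" "h = (\<lambda>x. (q (vadd D x) - p1 (vadd D x)) - (q D - p1 D))"
      unfolding Q_def by auto
    then show "nice h \<and> (\<exists>q\<in>P - {p1}. kap h = kap (\<lambda>x. q x - p1 x))"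
    proof cases
      case a
      have "nice (\<lambda>x. q x - p1 x)" using key_G2[OF P(2) p1 min, of q] a unfolding Pm_def by auto
      then show ?thesis using a unfolding Pm_def by auto
    next
      case b
      have nw: "nice (\<lambda>x. q x - p1 x)" using key_G2[OF P(2) p1 min, of q] b unfolding Pm_def by auto
      from key_G3[OF nw, of D] have "nice h \<and> kap h = kap (\<lambda>x. q x - p1 x)" using b by simp
      then show ?thesis using b unfolding Pm_def by auto
    qed
  qed
  have WQ: "W Q < W P" using W_less[OF P p1 min fQ] Qprop by blast
  have gQ: "good f k Q" using IH[OF fQ _ WQ] Qprop by blast
  obtain M' where HQ: "\<forall>\<chi>::int \<Rightarrow> nat. (\<forall>x. \<chi> x < n) \<longrightarrow> sol f k Q \<chi> M M'" using gQ unfolding good_def by blast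
  define B where "B = Max (insert 0 ((\<lambda>G. \<bar>p1 (ipv f G)\<bar>) ` {G. valid k N (M + M') G}))"
  have Bb: "\<bar>p1 (ipv f G)\<bar> \<le> B" if "valid k N (M + M') G" for G
    unfolding B_def using valid_finite that by (intro Max_ge) auto
  have B0: "B \<ge> 0" unfolding B_def using valid_finite by (intro Max_ge) auto
  define M2 where "M2 = M + M' + nat B"
  show "\<exists>M2. \<forall>\<chi>. (\<forall>x. \<chi> x < c) \<longrightarrow> sol f k P \<chi> N M2 \<or> (\<exists>a Gs col. cfg f k P p1 \<chi> N M2 (Suc r) a Gs col)"
  proof (rule exI[of _ M2], intro allI impI)
    fix \<chi> :: "int \<Rightarrow> nat" assume chc: "\<forall>x. \<chi> x < c"
    define ch' where "ch' x = e (pat \<chi> x)" for x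
    have patP: "pat \<chi> x \<in> Pat" for x using chc unfolding Pat_def pat_def by auto
    have ch'n: "\<forall>x. ch' x < n"
    proof
      fix x have "e (pat \<chi> x) \<in> e ` Pat" using patP by blast
      then show "ch' x < n" using e(1) unfolding ch'_def by auto
    qed
    have "sol f k Q ch' M M'" using HQ ch'n by blast
    then obtain b Gy where Gy: "valid k M M' Gy" and bb: "\<bar>b\<bar> \<le> int M'"
      and hb: "\<forall>h\<in>Q. \<bar>b + h (ipv f Gy)\<bar> \<le> int M'"
      and hc: "\<forall>h\<in>Q. \<forall>h'\<in>Q. ch' (b + h (ipv f Gy)) = ch' (b + h' (ipv f Gy))"
      unfolding sol_def by blast
    define y where "y = ipv f Gy"
    have patEq: "\<chi> (b + h y + s) = \<chi> (b + h' y + s)" if hh: "h \<in> Q" "h' \<in> Q" "s \<in> Win" for h h' s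
    proof -
      have "e (pat \<chi> (b + h y)) = e (pat \<chi> (b + h' y))" using hc hh unfolding ch'_def y_def by blast
      then have "pat \<chi> (b + h y) = pat \<chi> (b + h' y)" using e(2) patP unfolding inj_on_def by blast
      then have "pat \<chi> (b + h y) s = pat \<chi> (b + h' y) s" by simp
      then show ?thesis using hh(3) unfolding pat_def by simp
    qed
    obtain q0 where q0: "q0 \<in> Pm" using Pm_ne unfolding Pm_def by blast
    define h0 where "h0 = (\<lambda>x. q0 x - p1 x)"
    have h0Q: "h0 \<in> Q" unfolding Q_def h0_def using q0 by blast
    define t where "t = b + h0 y"
    have tb: "\<bar>t\<bar> \<le> int M'" using hb h0Q unfolding t_def y_def by blast
    have pt: "\<chi> (b + h y + s) = \<chi> (t + s)" if "h \<in> Q" "s \<in> Win" for h s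
      using patEq[OF that(1) h0Q that(2)] unfolding t_def .
    have chtc: "\<forall>x. \<chi> (t + x) < c" using chc by blast
    from HM[OF chtc]
    show "sol f k P \<chi> N M2 \<or> (\<exists>a Gs col. cfg f k P p1 \<chi> N M2 (Suc r) a Gs col)"
    proof
      assume "sol f k P (\<lambda>x. \<chi> (t + x)) N M"
      then have "sol f k P \<chi> N (M + M')" using sol_shift tb by blast
      then show ?thesis using sol_mono[of f k P \<chi> N "M + M'" M2] unfolding M2_def by simp
    next
      assume "\<exists>a Gs col. cfg f k P p1 (\<lambda>x. \<chi> (t + x)) N M r a Gs col"
      then obtain a Gs col where cf: "cfg f k P p1 (\<lambda>x. \<chi> (t + x)) N M r a Gs col" by blast
      have ab: "\<bar>a\<bar> \<le> int M" and ca: "\<chi> (t + a) \<notin> col ` {..<r}" and icol: "inj_on col {..<r}"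
        using cf unfolding cfg_def by auto
      have cfi: "valid k N M (Gs i) \<and> (\<forall>q\<in>Pm.
        \<bar>a + q (ipv f (Gs i)) - p1 (ipv f (Gs i))\<bar> \<le> int M \<and>
        \<chi> (t + (a + q (ipv f (Gs i)) - p1 (ipv f (Gs i)))) = col i)" if "i < r" for i
        using cf that unfolding cfg_def Pm_def by blast
      define a' where "a' = b + a"
      define Gs' where "Gs' i = (if i < r then (\<lambda>j. Gs i j \<union> Gy j) else Gy)" for i
      define col' where "col' i = (if i < r then col i else \<chi> (t + a))" for i
      have vG: "valid k N M' (Gs' i) \<and> ipv f (Gs' i) = (if i < r then vadd (ipv f (Gs i)) y else y)"
        if "i < Suc r" for i
      proof (cases "i < r")
        case True
        then show ?thesis using valid_union[OF conjunct1[OF cfi[OF True]] Gy] unfolding Gs'_def y_def by simp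
      next
        case False
        then show ?thesis using valid_mono[OF Gy order_refl NM] unfolding Gs'_def y_def by simp
      qed
      have fan: "\<bar>a' + q (ipv f (Gs' i)) - p1 (ipv f (Gs' i))\<bar> \<le> int (M + M') \<and>
          \<chi> (a' + q (ipv f (Gs' i)) - p1 (ipv f (Gs' i))) = col' i"
        if iq: "i < Suc r" "q \<in> Pm" for i q
      proof (cases "i < r")
        case True
        define D where "D = ipv f (Gs i)"
        have DD: "D \<in> Dset" using cfi[OF True] unfolding D_def Dset_def by blast
        define h where "h = (\<lambda>x. (q (vadd D x) - p1 (vadd D x)) - (q D - p1 D))"
        have hQ: "h \<in> Q" unfolding Q_def h_def using DD iq(2) by force
        define s where "s = a + q D - p1 D"
        have sb: "\<bar>s\<bar> \<le> int M" and cs: "\<chi> (t + s) = col i"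
          using cfi[OF True] iq(2) unfolding s_def D_def by auto
        have sW: "s \<in> Win" using sb unfolding Win_def by auto
        have ipvi: "ipv f (Gs' i) = vadd D y" using vG[OF iq(1)] True unfolding D_def by simp
        have eq: "a' + q (ipv f (Gs' i)) - p1 (ipv f (Gs' i)) = b + h y + s"
          unfolding ipvi h_def s_def a'_def by simp
        have "\<bar>b + h y\<bar> \<le> int M'" using hb hQ unfolding y_def by blast
        then have "\<bar>b + h y + s\<bar> \<le> int (M + M')" using sb by linarith
        moreover have "\<chi> (b + h y + s) = col' i" using pt[OF hQ sW] cs True unfolding col'_def by simp
        ultimately show ?thesis unfolding eq by simp
      next
        case False
        then have ir: "i = r" using iq(1) by simp
        define h where "h = (\<lambda>x. q x - p1 x)"
        have hQ: "h \<in> Q" unfolding Q_def h_def using iq(2) by blast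
        have aW: "a \<in> Win" using ab unfolding Win_def by auto
        have ipvi: "ipv f (Gs' i) = y" using vG[OF iq(1)] False by simp
        have eq: "a' + q (ipv f (Gs' i)) - p1 (ipv f (Gs' i)) = b + h y + a"
          unfolding ipvi h_def a'_def by simp
        have "\<bar>b + h y\<bar> \<le> int M'" using hb hQ unfolding y_def by blast
        then have "\<bar>b + h y + a\<bar> \<le> int (M + M')" using ab by linarith
        moreover have "\<chi> (b + h y + a) = col' i" using pt[OF hQ aW] False unfolding col'_def by simp
        ultimately show ?thesis unfolding eq by simp
      qed
      have a'b: "\<bar>a'\<bar> \<le> int (M + M')" using ab bb unfolding a'_def by linarith
      have inj: "inj_on col' {..<Suc r}"
      proof (rule inj_onI)
        fix i j assume i: "i \<in> {..<Suc r}" and j: "j \<in> {..<Suc r}" and eqc: "col' i = col' j"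
        show "i = j"
        proof (cases "i < r"; cases "j < r")
          assume "i < r" "j < r" then show ?thesis using eqc icol unfolding col'_def inj_on_def by auto
        next
          assume ir: "i < r" "\<not> j < r"
          then have "col i \<in> col ` {..<r}" by simp
          moreover have "col i = \<chi> (t + a)" using eqc ir unfolding col'_def by simp
          ultimately show ?thesis using ca by simp
        next
          assume ir: "\<not> i < r" "j < r"
          then have "col j \<in> col ` {..<r}" by simp
          moreover have "col j = \<chi> (t + a)" using eqc ir unfolding col'_def by simp
          ultimately show ?thesis using ca by simp
        next
          assume "\<not> i < r" "\<not> j < r" then show ?thesis using i j by auto
        qed
      qed
      show ?thesis
      proof (cases "\<chi> a' \<in> col' ` {..<Suc r}")
        case True
        then obtain i where i: "i < Suc r" "\<chi> a' = col' i" by auto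
        define D' where "D' = ipv f (Gs' i)"
        define a'' where "a'' = a' - p1 D'"
        have vi: "valid k N M' (Gs' i)" using vG[OF i(1)] by blast
        have "valid k N (M + M') (Gs' i)" using valid_mono[OF vi _ order_refl] by simp
        then have pb: "\<bar>p1 D'\<bar> \<le> B" using Bb unfolding D'_def by blast
        have all: "\<chi> (a'' + p D') = col' i \<and> \<bar>a'' + p D'\<bar> \<le> int M2" if p: "p \<in> P" for p
        proof (cases "p = p1")
          case True
          then show ?thesis using i(2) a'b unfolding a''_def M2_def by simp
        next
          case False
          then have "p \<in> Pm" using p unfolding Pm_def by blast
          from fan[OF i(1) this] have "\<bar>a' + p D' - p1 D'\<bar> \<le> int (M + M')"
            "\<chi> (a' + p D' - p1 D') = col' i" unfolding D'_def by auto
          moreover have e2: "a'' + p D' = a' + p D' - p1 D'" unfolding a''_def by simp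
          ultimately show ?thesis unfolding M2_def e2 using B0 by simp
        qed
        have "sol f k P \<chi> N M2"
          unfolding sol_def
        proof (intro exI conjI)
          show "valid k N M2 (Gs' i)" using valid_mono[OF vi _ order_refl] unfolding M2_def by simp
          show "\<bar>a''\<bar> \<le> int M2" using a'b pb B0 unfolding a''_def M2_def by simp
          show "\<forall>p\<in>P. \<bar>a'' + p (ipv f (Gs' i))\<bar> \<le> int M2" using all unfolding D'_def by blast
          show "\<forall>p\<in>P. \<forall>p'\<in>P. \<chi> (a'' + p (ipv f (Gs' i))) = \<chi> (a'' + p' (ipv f (Gs' i)))"
            using all unfolding D'_def by simp
        qed
        then show ?thesis by blast
      next
        case False
        have "cfg f k P p1 \<chi> N M2 (Suc r) a' Gs' col'"
          unfolding cfg_def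
        proof (intro conjI allI impI ballI)
          show "\<bar>a'\<bar> \<le> int M2" using a'b unfolding M2_def by simp
          show "\<chi> a' \<notin> col' ` {..<Suc r}" using False .
          show "inj_on col' {..<Suc r}" using inj .
          fix i assume i: "i < Suc r"
          show "valid k N M2 (Gs' i)" using valid_mono[OF conjunct1[OF vG[OF i]] _ order_refl]
            unfolding M2_def by simp
          fix q assume q: "q \<in> P - {p1}"
          then have qm: "q \<in> Pm" unfolding Pm_def .
          show "\<bar>a' + q (ipv f (Gs' i)) - p1 (ipv f (Gs' i))\<bar> \<le> int M2"
            using conjunct1[OF fan[OF i qm]] unfolding M2_def by simp
          show "\<chi> (a' + q (ipv f (Gs' i)) - p1 (ipv f (Gs' i))) = col' i"
            using conjunct2[OF fan[OF i qm]] .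
        qed
        then show ?thesis by blast
      qed
    qed
  qed
qed




lemma cl_all:
  assumes P: "finite P" "\<forall>u\<in>P. nice u" and p1: "p1 \<in> P" and min: "\<forall>q\<in>P. deg p1 \<le> deg q"
    and Pm_ne: "P - {p1} \<noteq> {}"
    and IH: "\<And>Q. finite Q \<Longrightarrow> \<forall>u\<in>Q. nice u \<Longrightarrow> W Q < W P \<Longrightarrow> good f k Q"
  shows "cl f k P p1 c r"
proof (induction r)
  case 0 show ?case by (rule cl_0)
next
  case (Suc r) show ?case by (rule cl_step[OF P p1 min Pm_ne IH Suc])
qed

lemma good_of_cl:
  assumes Pm_ne: "P - {p1} \<noteq> {}" and cc: "cl f k P p1 c c"
  shows "\<exists>M. \<forall>\<chi>. (\<forall>x. \<chi> x < c) \<longrightarrow> sol f k P \<chi> N M"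
proof -
  obtain M where M: "\<forall>\<chi>::int \<Rightarrow> nat. (\<forall>x. \<chi> x < c) \<longrightarrow> sol f k P \<chi> N M \<or> (\<exists>a Gs col. cfg f k P p1 \<chi> N M c a Gs col)"
    using cc unfolding cl_def by blast
  have "sol f k P \<chi> N M" if chc: "\<forall>x. \<chi> x < c" for \<chi>
  proof -
    have "\<not> cfg f k P p1 \<chi> N M c a Gs col" for a Gs col
    proof
      assume cf: "cfg f k P p1 \<chi> N M c a Gs col"
      obtain q0 where q0: "q0 \<in> P - {p1}" using Pm_ne by blast
      have "col i < c" if "i < c" for i
      proof -
        have "\<chi> (a + q0 (ipv f (Gs i)) - p1 (ipv f (Gs i))) = col i" using cf that q0 unfolding cfg_def by blast
        then show ?thesis using chc by metis
      qed
      then have sub: "col ` {..<c} \<subseteq> {..<c}" by auto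
      have "card (col ` {..<c}) = card {..<c}" using cf unfolding cfg_def by (simp add: card_image)
      then have "col ` {..<c} = {..<c}" using sub by (simp add: card_subset_eq)
      moreover have "\<chi> a \<in> {..<c}" using chc by simp
      ultimately show False using cf unfolding cfg_def by blast
    qed
    then show ?thesis using M chc by blast
  qed
  then show ?thesis by blast
qed

lemma good_all: "finite P \<Longrightarrow> \<forall>u\<in>P. nice u \<Longrightarrow> good f k P"
proof (induction "W P" arbitrary: P rule: less_induct)
  case less
  show ?case
  proof (cases "\<exists>p. P \<subseteq> {p}")
    case True
    then show ?thesis using good_small by blast
  next
    case False
    then have Pne: "P \<noteq> {}" by blast
    define d where "d = Min (deg ` P)"
    have "d \<in> deg ` P" unfolding d_def using less.prems(1) Pne by (intro Min_in) auto
    then obtain p1 where p1: "p1 \<in> P" "deg p1 = d" by blast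
    have min: "\<forall>q\<in>P. deg p1 \<le> deg q" using less.prems(1) p1(2) unfolding d_def by simp
    have Pm: "P - {p1} \<noteq> {}" using False by blast
    have IH: "good f k Q" if "finite Q" "\<forall>u\<in>Q. nice u" "W Q < W P" for Q
      using less.hyps that by blast
    have "cl f k P p1 c c" for c by (rule cl_all[OF less.prems p1(1) min Pm IH])
    then show ?thesis unfolding good_def using good_of_cl[OF Pm] by blast
  qed
qed




theorem mainTheorem3:
  fixes k m :: nat
    and p :: "nat \<Rightarrow> (nat \<Rightarrow> int) \<Rightarrow> int"
    and \<C> :: "int set set"
    and f :: "nat \<Rightarrow> nat \<Rightarrow> int"
  assumes polys: "\<forall>i<m. int_poly_no_const k (p i)"
    and part: "partition_on (UNIV :: int set) \<C>"
    and fin: "finite \<C>"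
  shows "\<exists>C\<in>\<C>. \<exists>a::int. \<exists>F :: nat \<Rightarrow> nat set.
           (\<forall>j<k. finite (F j) \<and> F j \<noteq> {}) \<and>
           {a + p i (\<lambda>j. \<Sum>t\<in>F j. f j t) | i. i < m} \<subseteq> C"
proof -
  define e0 :: vec where "e0 = (\<lambda>j. if j = 0 then 1 else 0)"
  define cc :: int where "cc = 1 + (\<Sum>i<m. \<bar>p i e0\<bar>)"
  define L :: "vec \<Rightarrow> int" where "L = (\<lambda>x. cc * x 0)"
  define PP where "PP = insert L ((\<lambda>i x. p i x + L x) ` {..<m})"
  have le: "\<bar>p i e0\<bar> < cc" if "i < m" for i
  proof -
    have "\<bar>p i e0\<bar> \<le> (\<Sum>i<m. \<bar>p i e0\<bar>)"
      using member_le_sum[of i "{..<m}" "\<lambda>i. \<bar>p i e0\<bar>"] that by simp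
    then show ?thesis unfolding cc_def by simp
  qed
  have cc1: "cc \<ge> 1" unfolding cc_def by (simp add: sum_nonneg)
  have fL: "fdeg 1 L" unfolding L_def by (rule fdeg_smult[OF fdeg_coord])
  have niceL: "nice L"
  proof -
    have "L e0 \<noteq> 0" using cc1 by (simp add: L_def e0_def)
    then show ?thesis using fL unfolding nice_def fin_def by (auto simp: L_def z0_def)
  qed
  have nicep: "nice (\<lambda>x. p i x + L x)" if im: "i < m" for i
  proof -
    obtain d where d: "fdeg d (p i)" and z: "p i z0 = 0" using poly_fdeg[of k "p i"] polys im by blast
    have "fdeg (max d 1) (\<lambda>x. p i x + L x)"
      using fdeg_add[OF fdeg_mono[OF d] fdeg_mono[OF fL]] by simp
    moreover have "p i e0 + L e0 \<noteq> 0" using le[OF im] by (simp add: L_def e0_def)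
    moreover have "p i z0 + L z0 = 0" using z by (simp add: L_def z0_def)
    ultimately show ?thesis unfolding nice_def fin_def by blast
  qed
  have fPP: "finite PP" unfolding PP_def by simp
  have nPP: "\<forall>u\<in>PP. nice u" unfolding PP_def using niceL nicep by auto
  have gPP: "good f k PP" using good_all[OF fPP nPP] .
  obtain eC :: "int set \<Rightarrow> nat" and nC :: nat where eC: "eC ` \<C> = {i. i < nC}" "inj_on eC \<C>"
    using finite_imp_inj_to_nat_seg[OF fin] by blast
  define cell where "cell x = (SOME C. C \<in> \<C> \<and> x \<in> C)" for x :: int
  have cell: "cell x \<in> \<C> \<and> x \<in> cell x" for x
  proof -
    have "x \<in> \<Union>\<C>" using partition_onD1[OF part] by blast
    then have "\<exists>C. C \<in> \<C> \<and> x \<in> C" by blast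
    then show ?thesis unfolding cell_def by (rule someI_ex)
  qed
  define ch where "ch x = eC (cell x)" for x
  have chn: "\<forall>x. ch x < nC"
  proof
    fix x have "eC (cell x) \<in> eC ` \<C>" using cell by blast
    then show "ch x < nC" using eC(1) unfolding ch_def by auto
  qed
  obtain M where "\<forall>\<chi>::int \<Rightarrow> nat. (\<forall>x. \<chi> x < nC) \<longrightarrow> sol f k PP \<chi> 0 M"
    using gPP unfolding good_def by blast
  then have "sol f k PP ch 0 M" using chn by blast
  then obtain a G where G: "valid k 0 M G"
    and eqc: "\<forall>q\<in>PP. \<forall>q'\<in>PP. ch (a + q (ipv f G)) = ch (a + q' (ipv f G))"
    unfolding sol_def by blast
  define y where "y = ipv f G"
  define x0 where "x0 = a + L y"
  define C where "C = cell x0"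
  have C: "C \<in> \<C>" using cell unfolding C_def by blast
  have inC: "x0 + p i y \<in> C" if im: "i < m" for i
  proof -
    have mem: "(\<lambda>x. p i x + L x) \<in> PP" "L \<in> PP" using im unfolding PP_def by auto
    have "ch (a + (p i y + L y)) = ch (a + L y)" using eqc[rule_format, OF mem(1) mem(2)] unfolding y_def by simp
    then have "eC (cell (x0 + p i y)) = eC (cell x0)" unfolding ch_def x0_def by (simp add: algebra_simps)
    then have "cell (x0 + p i y) = cell x0" using eC(2) cell unfolding inj_on_def by blast
    then show ?thesis using cell unfolding C_def by metis
  qed
  have F: "\<forall>j<k. finite (G j) \<and> G j \<noteq> {}"
  proof (intro allI impI)
    fix j assume "j < k"
    then have "G j \<noteq> {}" "G j \<subseteq> {0<..M}" using G unfolding valid_def by blast+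
    then show "finite (G j) \<and> G j \<noteq> {}" using finite_subset by blast
  qed
  have "{x0 + p i (\<lambda>j. \<Sum>t\<in>G j. f j t) | i. i < m} \<subseteq> C"
    using inC unfolding y_def ipv_def by blast
  then show ?thesis using C F by blast
qed


end
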